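(* For all $0<|t|<\pi/2$, \[ \frac{\pi^2+\frac{28-8\pi}{\pi}t^2+\frac{16\pi-48}{\pi^3}t^4}{\pi^2-4t^2}<\sec t<\frac{\pi^2-\frac{8-\pi^2}{2}t^2-\frac{4\pi^3-128}{2\pi^3}t^4}{\pi^2-4t^2}. \] *)

theory Defs
  imports Complex_Main
begin

definition sec :: "real \<Rightarrow> real" where
  "sec t = 1 / cos t"

end

theory Submission imports Defs "HOL-Analysis.Complex_Transcendental" begin
lemma pipow:
  fixes p :: real
  assumes "3.141592653588 \<le> p" "p \<le> 3.1415926535899"
  shows
    "(785398163397/250000000000) \<le> p" "p \<le> (31415926535899/10000000000000)"
    "(616850275067380710579609/62500000000000000000000) \<le> p^2" "p^2 \<le> (986960440109002942135738201/100000000000000000000000000)"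
    "(484473073128855070512609715958371773/15625000000000000000000000000000000) \<le> p^3" "p^3 \<le> (31006276680302981257893200965589092177699/1000000000000000000000000000000000000000)"
    "(380504261850703244705994602243163032220726592881/3906250000000000000000000000000000000000000000) \<le> p^4" "p^4 \<le> (974090910340156783475047070561783970519999543210716401/10000000000000000000000000000000000000000000000000000)"
    "(298847348422273500604956823837975781906204200365614734976757/976562500000000000000000000000000000000000000000000000000) \<le> p^5" "p^5 \<le> (30601968478533345098429781722780033712831955187238904067882034579499/100000000000000000000000000000000000000000000000000000000000000000)"
    "(234714158586916952982355057876828647811297802686800808761625845283163529/244140625000000000000000000000000000000000000000000000000000000000000) \<le> p^6" "p^6 \<le> (961389193575500463822273843702431648855931241270545507403822426152896150192934601/1000000000000000000000000000000000000000000000000000000000000000000000000000000)"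
    "(184344069077436771664905064204214858233868238057235047214955164857084311082613148013/61035156250000000000000000000000000000000000000000000000000000000000000000000000) \<le> p^7" "p^7 \<le> (30202932277775105432323355287383889266805338727088299905875004329360884493057013140098985741299/10000000000000000000000000000000000000000000000000000000000000000000000000000000000000000000)"
    "(144783493286548540638009287346354717003258837273044785450566366350453375908667379188854719880161/15258789062500000000000000000000000000000000000000000000000000000000000000000000000000000000) \<le> p^8" "p^8 \<le> (948853101607315361631469763856814773951889652046854443816668932519390119628595277535137653489610887650392801/100000000000000000000000000000000000000000000000000000000000000000000000000000000000000000000000000000000)"
    "(113712689717457103262183112892055826557247178458059062307002731265105943096945805628691876605733353336666917/3814697265625000000000000000000000000000000000000000000000000000000000000000000000000000000000000000000) \<le> p^9" "p^9 \<le> (29809099333455328757936188355506182515282473414913440381972878337437217831591742441837927557645990782648039188106577663099/1000000000000000000000000000000000000000000000000000000000000000000000000000000000000000000000000000000000000000000000)"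
    "(89309737659023735751250394230128959289654711441119889929271934907476958020970826060817144813756325990924258429330237049/953674316406250000000000000000000000000000000000000000000000000000000000000000000000000000000000000000000000000000) \<le> p^10" "p^10 \<le> (936480474761148456264372432147889325970015757657250160024169467114814193197434241496022818982870720839281697608957876844297977751091001/10000000000000000000000000000000000000000000000000000000000000000000000000000000000000000000000000000000000000000000000000000000000)"
    "(70143703930865128283061907674615490388557792108143564655336973905708935952766954599083729761773602053962328660930164095083245095453/238418579101562500000000000000000000000000000000000000000000000000000000000000000000000000000000000000000000000000000000000000) \<le> p^11" "p^11 \<le> (29420401797400057521040457328419034136485635159399578903570169697130829454602108841016994758954394503554968132287620063000496033960363285513842344899/100000000000000000000000000000000000000000000000000000000000000000000000000000000000000000000000000000000000000000000000000000000000000000000000)"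
    "(55090736241164401214829622231294185229339795825329296487506382619691512150554268482473243813921655390499159816919845229956213175795594155733841/59604644775390625000000000000000000000000000000000000000000000000000000000000000000000000000000000000000000000000000000000000000000000000) \<le> p^12" "p^12 \<le> (924269181523751102301643875903830115265738588939210771552796521856854920987114584685151197881865569427390675836909949740142225508095084014144467426596060263029201/1000000000000000000000000000000000000000000000000000000000000000000000000000000000000000000000000000000000000000000000000000000000000000000000000000000000000)"
proof -
  have p0: "0 \<le> p" using assms(1) by simp
  show "(785398163397/250000000000) \<le> p" using power_mono[OF assms(1), of 1] by (simp add: power_divide)
  show "p \<le> (31415926535899/10000000000000)" using power_mono[OF assms(2) p0, of 1] by (simp add: power_divide)
  show "(616850275067380710579609/62500000000000000000000) \<le> p^2" using power_mono[OF assms(1), of 2] by (simp add: power_divide)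
  show "p^2 \<le> (986960440109002942135738201/100000000000000000000000000)" using power_mono[OF assms(2) p0, of 2] by (simp add: power_divide)
  show "(484473073128855070512609715958371773/15625000000000000000000000000000000) \<le> p^3" using power_mono[OF assms(1), of 3] by (simp add: power_divide)
  show "p^3 \<le> (31006276680302981257893200965589092177699/1000000000000000000000000000000000000000)" using power_mono[OF assms(2) p0, of 3] by (simp add: power_divide)
  show "(380504261850703244705994602243163032220726592881/3906250000000000000000000000000000000000000000) \<le> p^4" using power_mono[OF assms(1), of 4] by (simp add: power_divide)
  show "p^4 \<le> (974090910340156783475047070561783970519999543210716401/10000000000000000000000000000000000000000000000000000)" using power_mono[OF assms(2) p0, of 4] by (simp add: power_divide)
  show "(298847348422273500604956823837975781906204200365614734976757/976562500000000000000000000000000000000000000000000000000) \<le> p^5" using power_mono[OF assms(1), of 5] by (simp add: power_divide)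
  show "p^5 \<le> (30601968478533345098429781722780033712831955187238904067882034579499/100000000000000000000000000000000000000000000000000000000000000000)" using power_mono[OF assms(2) p0, of 5] by (simp add: power_divide)
  show "(234714158586916952982355057876828647811297802686800808761625845283163529/244140625000000000000000000000000000000000000000000000000000000000000) \<le> p^6" using power_mono[OF assms(1), of 6] by (simp add: power_divide)
  show "p^6 \<le> (961389193575500463822273843702431648855931241270545507403822426152896150192934601/1000000000000000000000000000000000000000000000000000000000000000000000000000000)" using power_mono[OF assms(2) p0, of 6] by (simp add: power_divide)
  show "(184344069077436771664905064204214858233868238057235047214955164857084311082613148013/61035156250000000000000000000000000000000000000000000000000000000000000000000000) \<le> p^7" using power_mono[OF assms(1), of 7] by (simp add: power_divide)
  show "p^7 \<le> (30202932277775105432323355287383889266805338727088299905875004329360884493057013140098985741299/10000000000000000000000000000000000000000000000000000000000000000000000000000000000000000000)" using power_mono[OF assms(2) p0, of 7] by (simp add: power_divide)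
  show "(144783493286548540638009287346354717003258837273044785450566366350453375908667379188854719880161/15258789062500000000000000000000000000000000000000000000000000000000000000000000000000000000) \<le> p^8" using power_mono[OF assms(1), of 8] by (simp add: power_divide)
  show "p^8 \<le> (948853101607315361631469763856814773951889652046854443816668932519390119628595277535137653489610887650392801/100000000000000000000000000000000000000000000000000000000000000000000000000000000000000000000000000000000)" using power_mono[OF assms(2) p0, of 8] by (simp add: power_divide)
  show "(113712689717457103262183112892055826557247178458059062307002731265105943096945805628691876605733353336666917/3814697265625000000000000000000000000000000000000000000000000000000000000000000000000000000000000000000) \<le> p^9" using power_mono[OF assms(1), of 9] by (simp add: power_divide)
  show "p^9 \<le> (29809099333455328757936188355506182515282473414913440381972878337437217831591742441837927557645990782648039188106577663099/1000000000000000000000000000000000000000000000000000000000000000000000000000000000000000000000000000000000000000000000)" using power_mono[OF assms(2) p0, of 9] by (simp add: power_divide)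
  show "(89309737659023735751250394230128959289654711441119889929271934907476958020970826060817144813756325990924258429330237049/953674316406250000000000000000000000000000000000000000000000000000000000000000000000000000000000000000000000000000) \<le> p^10" using power_mono[OF assms(1), of 10] by (simp add: power_divide)
  show "p^10 \<le> (936480474761148456264372432147889325970015757657250160024169467114814193197434241496022818982870720839281697608957876844297977751091001/10000000000000000000000000000000000000000000000000000000000000000000000000000000000000000000000000000000000000000000000000000000000)" using power_mono[OF assms(2) p0, of 10] by (simp add: power_divide)
  show "(70143703930865128283061907674615490388557792108143564655336973905708935952766954599083729761773602053962328660930164095083245095453/238418579101562500000000000000000000000000000000000000000000000000000000000000000000000000000000000000000000000000000000000000) \<le> p^11" using power_mono[OF assms(1), of 11] by (simp add: power_divide)
  show "p^11 \<le> (29420401797400057521040457328419034136485635159399578903570169697130829454602108841016994758954394503554968132287620063000496033960363285513842344899/100000000000000000000000000000000000000000000000000000000000000000000000000000000000000000000000000000000000000000000000000000000000000000000000)" using power_mono[OF assms(2) p0, of 11] by (simp add: power_divide)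
  show "(55090736241164401214829622231294185229339795825329296487506382619691512150554268482473243813921655390499159816919845229956213175795594155733841/59604644775390625000000000000000000000000000000000000000000000000000000000000000000000000000000000000000000000000000000000000000000000000) \<le> p^12" using power_mono[OF assms(1), of 12] by (simp add: power_divide)
  show "p^12 \<le> (924269181523751102301643875903830115265738588939210771552796521856854920987114584685151197881865569427390675836909949740142225508095084014144467426596060263029201/1000000000000000000000000000000000000000000000000000000000000000000000000000000000000000000000000000000000000000000000000000000000000000000000000000000000000)" using power_mono[OF assms(2) p0, of 12] by (simp add: power_divide)
qed

definition QA1 :: "real \<Rightarrow> real \<Rightarrow> real" where "QA1 p t = (((-28) * p^2 + 4 * p^3 + (1/2) * p^5) * 1 + (48 * 1 + (-16) * p + 14 * p^2 + (-4) * p^3 + (-1/24) * p^5) * t^2 + ((-24) * 1 + 8 * p + (-7/6) * p^2 + (1/3) * p^3 + (1/720) * p^5) * t^4 + (2 * 1 + (-2/3) * p + (7/180) * p^2 + (-1/90) * p^3 + (-1/40320) * p^5) * t^6 + ((-1/15) * 1 + (1/45) * p + (-1/1440) * p^2 + (1/5040) * p^3) * t^8 + ((1/840) * 1 + (-1/2520) * p) * t^10)"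

lemma QA1pos:
  fixes p t :: real
  assumes "3.141592653588 \<le> p" "p \<le> 3.1415926535899" "0 \<le> t" "t \<le> 1"
  shows "0 < QA1 p t"
proof -
  note pw = pipow[OF assms(1,2)]
  have c0: "(3430129413/5000000000) \<le> ((-28) * p^2 + 4 * p^3 + (1/2) * p^5)" using pw by linarith
  have m0: "(3430129413/5000000000) * 1 \<le> ((-28) * p^2 + 4 * p^3 + (1/2) * p^5) * 1" using c0 assms(3) by (intro mult_right_mono) auto
  have c2: "(-866947763/1000000000) \<le> (48 * 1 + (-16) * p + 14 * p^2 + (-4) * p^3 + (-1/24) * p^5)" using pw by linarith
  have m2: "(-866947763/1000000000) * t^2 \<le> (48 * 1 + (-16) * p + 14 * p^2 + (-4) * p^3 + (-1/24) * p^5) * t^2" using c2 assms(3) by (intro mult_right_mono) auto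
  have c4: "(59164947/156250000) \<le> ((-24) * 1 + 8 * p + (-7/6) * p^2 + (1/3) * p^3 + (1/720) * p^5)" using pw by linarith
  have m4: "(59164947/156250000) * t^4 \<le> ((-24) * 1 + 8 * p + (-7/6) * p^2 + (1/3) * p^3 + (1/720) * p^5) * t^4" using c4 assms(3) by (intro mult_right_mono) auto
  have c6: "(-78351391/1250000000) \<le> (2 * 1 + (-2/3) * p + (7/180) * p^2 + (-1/90) * p^3 + (-1/40320) * p^5)" using pw by linarith
  have m6: "(-78351391/1250000000) * t^6 \<le> (2 * 1 + (-2/3) * p + (7/180) * p^2 + (-1/90) * p^3 + (-1/40320) * p^5) * t^6" using c6 assms(3) by (intro mult_right_mono) auto
  have c8: "(3055813/1250000000) \<le> ((-1/15) * 1 + (1/45) * p + (-1/1440) * p^2 + (1/5040) * p^3)" using pw by linarith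
  have m8: "(3055813/1250000000) * t^8 \<le> ((-1/15) * 1 + (1/45) * p + (-1/1440) * p^2 + (1/5040) * p^3) * t^8" using c8 assms(3) by (intro mult_right_mono) auto
  have c10: "(-140469/2500000000) \<le> ((1/840) * 1 + (-1/2520) * p)" using pw by linarith
  have m10: "(-140469/2500000000) * t^10 \<le> ((1/840) * 1 + (-1/2520) * p) * t^10" using c10 assms(3) by (intro mult_right_mono) auto
  have K0: "0 < (3430129413/5000000000) * 1 + (-866947763/1000000000) * t^2 + (59164947/156250000) * t^4 + (-78351391/1250000000) * t^6 + (3055813/1250000000) * t^8 + (-140469/2500000000) * t^10" if a: "0 \<le> t" and b: "t \<le> (87/100)" for t :: real
  proof -
    have t0: "0 \<le> t" using a by simp
    have "t^2 \<le> (7569/10000)" using power_mono[OF b t0, of 2] by (simp add: power_divide)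
    note f2 = this
    have "0 \<le> t^4" using power_mono[OF a, of 4] by (simp add: power_divide)
    note f4 = this
    have "t^6 \<le> (433626201009/1000000000000)" using power_mono[OF b t0, of 6] by (simp add: power_divide)
    note f6 = this
    have "0 \<le> t^8" using power_mono[OF a, of 8] by (simp add: power_divide)
    note f8 = this
    have "t^10 \<le> (24842341419143568849/100000000000000000000)" using power_mono[OF b t0, of 10] by (simp add: power_divide)
    note f10 = this
    show ?thesis using f2 f4 f6 f8 f10 by linarith
  qed
  have K1: "0 < (3430129413/5000000000) * 1 + (-866947763/1000000000) * t^2 + (59164947/156250000) * t^4 + (-78351391/1250000000) * t^6 + (3055813/1250000000) * t^8 + (-140469/2500000000) * t^10" if a: "(87/100) \<le> t" and b: "t \<le> (49/50)" for t :: real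
  proof -
    have t0: "0 \<le> t" using a by simp
    have "t^2 \<le> (2401/2500)" using power_mono[OF b t0, of 2] by (simp add: power_divide)
    note f2 = this
    have "(57289761/100000000) \<le> t^4" using power_mono[OF a, of 4] by (simp add: power_divide)
    note f4 = this
    have "t^6 \<le> (13841287201/15625000000)" using power_mono[OF b t0, of 6] by (simp add: power_divide)
    note f6 = this
    have "(3282116715437121/10000000000000000) \<le> t^8" using power_mono[OF a, of 8] by (simp add: power_divide)
    note f8 = this
    have "t^10 \<le> (79792266297612001/97656250000000000)" using power_mono[OF b t0, of 10] by (simp add: power_divide)
    note f10 = this
    show ?thesis using f2 f4 f6 f8 f10 by linarith
  qed
  have K2: "0 < (3430129413/5000000000) * 1 + (-866947763/1000000000) * t^2 + (59164947/156250000) * t^4 + (-78351391/1250000000) * t^6 + (3055813/1250000000) * t^8 + (-140469/2500000000) * t^10" if a: "(49/50) \<le> t" and b: "t \<le> 1" for t :: real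
  proof -
    have t0: "0 \<le> t" using a by simp
    have "t^2 \<le> 1" using power_mono[OF b t0, of 2] by (simp add: power_divide)
    note f2 = this
    have "(5764801/6250000) \<le> t^4" using power_mono[OF a, of 4] by (simp add: power_divide)
    note f4 = this
    have "t^6 \<le> 1" using power_mono[OF b t0, of 6] by (simp add: power_divide)
    note f6 = this
    have "(33232930569601/39062500000000) \<le> t^8" using power_mono[OF a, of 8] by (simp add: power_divide)
    note f8 = this
    have "t^10 \<le> 1" using power_mono[OF b t0, of 10] by (simp add: power_divide)
    note f10 = this
    show ?thesis using f2 f4 f6 f8 f10 by linarith
  qed
  have J0: "0 < (3430129413/5000000000) * 1 + (-866947763/1000000000) * t^2 + (59164947/156250000) * t^4 + (-78351391/1250000000) * t^6 + (3055813/1250000000) * t^8 + (-140469/2500000000) * t^10" if "t \<le> (87/100)" using K0[of t] assms(3) that by simp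
  have J1: "0 < (3430129413/5000000000) * 1 + (-866947763/1000000000) * t^2 + (59164947/156250000) * t^4 + (-78351391/1250000000) * t^6 + (3055813/1250000000) * t^8 + (-140469/2500000000) * t^10" if "t \<le> (49/50)" using J0 K1[of t] that by (meson linorder_le_cases)
  have J2: "0 < (3430129413/5000000000) * 1 + (-866947763/1000000000) * t^2 + (59164947/156250000) * t^4 + (-78351391/1250000000) * t^6 + (3055813/1250000000) * t^8 + (-140469/2500000000) * t^10" if "t \<le> 1" using J1 K2[of t] that by (meson linorder_le_cases)
  have "0 < (3430129413/5000000000) * 1 + (-866947763/1000000000) * t^2 + (59164947/156250000) * t^4 + (-78351391/1250000000) * t^6 + (3055813/1250000000) * t^8 + (-140469/2500000000) * t^10" using J2 assms(4) by simp
  then show ?thesis unfolding QA1_def using m0 m2 m4 m6 m8 m10 by linarith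
qed

definition QA2 :: "real \<Rightarrow> real \<Rightarrow> real" where "QA2 p t = ((128 * 1 + (-5/12) * p^5) * 1 + ((-64) * 1 + (5/3) * p^3 + (7/180) * p^5) * t^2 + ((16/3) * 1 + (-7/45) * p^3 + (-29/20160) * p^5) * t^4 + ((-8/45) * 1 + (29/5040) * p^3 + (-1/40320) * p^5) * t^6 + ((-1/315) * 1 + (1/10080) * p^3) * t^8)"

lemma QA2pos:
  fixes p t :: real
  assumes "3.141592653588 \<le> p" "p \<le> 3.1415926535899" "0 \<le> t" "t \<le> 1"
  shows "0 < QA2 p t"
proof -
  note pw = pipow[OF assms(1,2)]
  have c0: "(4917980061/10000000000) \<le> (128 * 1 + (-5/12) * p^5)" using pw by linarith
  have m0: "(4917980061/10000000000) * 1 \<le> (128 * 1 + (-5/12) * p^5) * 1" using c0 assms(3) by (intro mult_right_mono) auto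
  have c2: "(-2110533401/5000000000) \<le> ((-64) * 1 + (5/3) * p^3 + (7/180) * p^5)" using pw by linarith
  have m2: "(-2110533401/5000000000) * t^2 \<le> ((-64) * 1 + (5/3) * p^3 + (7/180) * p^5) * t^2" using c2 assms(3) by (intro mult_right_mono) auto
  have c4: "(699278507/10000000000) \<le> ((16/3) * 1 + (-7/45) * p^3 + (-29/20160) * p^5)" using pw by linarith
  have m4: "(699278507/10000000000) * t^4 \<le> ((16/3) * 1 + (-7/45) * p^3 + (-29/20160) * p^5) * t^4" using c4 assms(3) by (intro mult_right_mono) auto
  have c6: "(-69584201/10000000000) \<le> ((-8/45) * 1 + (29/5040) * p^3 + (-1/40320) * p^5)" using pw by linarith
  have m6: "(-69584201/10000000000) * t^6 \<le> ((-8/45) * 1 + (29/5040) * p^3 + (-1/40320) * p^5) * t^6" using c6 assms(3) by (intro mult_right_mono) auto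
  have c8: "(-985837/10000000000) \<le> ((-1/315) * 1 + (1/10080) * p^3)" using pw by linarith
  have m8: "(-985837/10000000000) * t^8 \<le> ((-1/315) * 1 + (1/10080) * p^3) * t^8" using c8 assms(3) by (intro mult_right_mono) auto
  have K0: "0 < (4917980061/10000000000) * 1 + (-2110533401/5000000000) * t^2 + (699278507/10000000000) * t^4 + (-69584201/10000000000) * t^6 + (-985837/10000000000) * t^8" if a: "0 \<le> t" and b: "t \<le> 1" for t :: real
  proof -
    have t0: "0 \<le> t" using a by simp
    have "t^2 \<le> 1" using power_mono[OF b t0, of 2] by (simp add: power_divide)
    note f2 = this
    have "0 \<le> t^4" using power_mono[OF a, of 4] by (simp add: power_divide)
    note f4 = this
    have "t^6 \<le> 1" using power_mono[OF b t0, of 6] by (simp add: power_divide)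
    note f6 = this
    have "t^8 \<le> 1" using power_mono[OF b t0, of 8] by (simp add: power_divide)
    note f8 = this
    show ?thesis using f2 f4 f6 f8 by linarith
  qed
  have J0: "0 < (4917980061/10000000000) * 1 + (-2110533401/5000000000) * t^2 + (699278507/10000000000) * t^4 + (-69584201/10000000000) * t^6 + (-985837/10000000000) * t^8" if "t \<le> 1" using K0[of t] assms(3) that by simp
  have "0 < (4917980061/10000000000) * 1 + (-2110533401/5000000000) * t^2 + (699278507/10000000000) * t^4 + (-69584201/10000000000) * t^6 + (-985837/10000000000) * t^8" using J0 assms(4) by simp
  then show ?thesis unfolding QA2_def using m0 m2 m4 m6 m8 by linarith
qed

definition QB1 :: "real \<Rightarrow> real \<Rightarrow> real" where "QB1 p u = ((44 * p^2 + (-16) * p^3 + (2/3) * p^4) * 1 + ((-96) * p + 32 * p^2 + (-2/3) * p^3) * u + (48 * 1 + (-16) * p + (-22/3) * p^2 + (8/3) * p^3 + (-1/30) * p^4) * u^2 + (16 * p + (-16/3) * p^2 + (1/30) * p^3) * u^3 + ((-8) * 1 + (8/3) * p + (11/30) * p^2 + (-2/15) * p^3 + (-1/1260) * p^4) * u^4 + ((-4/5) * p + (4/15) * p^2 + (1/1260) * p^3) * u^5 + ((2/5) * 1 + (-2/15) * p + (11/1260) * p^2 + (-1/315) * p^3) * u^6 + ((-2/105) * p + (2/315) * p^2) * u^7 + ((1/105) * 1 + (-1/315) * p) * u^8)"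

lemma QB1pos:
  fixes p u :: real
  assumes "3.141592653588 \<le> p" "p \<le> 3.1415926535899" "0 \<le> u" "u \<le> (1427/2500)"
  shows "0 < QB1 p u"
proof -
  note pw = pipow[OF assms(1,2)]
  have c0: "(31015607851/10000000000) \<le> (44 * p^2 + (-16) * p^3 + (2/3) * p^4)" using pw by linarith
  have m0: "(31015607851/10000000000) * 1 \<le> (44 * p^2 + (-16) * p^3 + (2/3) * p^4) * 1" using c0 assms(3) by (intro mult_right_mono) auto
  have c1: "(-502844143/78125000) \<le> ((-96) * p + 32 * p^2 + (-2/3) * p^3)" using pw by linarith
  have m1: "(-502844143/78125000) * u \<le> ((-96) * p + 32 * p^2 + (-2/3) * p^3) * u" using c1 assms(3) by (intro mult_right_mono) auto
  have c2: "(47938533807/10000000000) \<le> (48 * 1 + (-16) * p + (-22/3) * p^2 + (8/3) * p^3 + (-1/30) * p^4)" using pw by linarith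
  have m2: "(47938533807/10000000000) * u^2 \<le> (48 * 1 + (-16) * p + (-22/3) * p^2 + (8/3) * p^3 + (-1/30) * p^4) * u^2" using c2 assms(3) by (intro mult_right_mono) auto
  have c3: "(-6694325629/5000000000) \<le> (16 * p + (-16/3) * p^2 + (1/30) * p^3)" using pw by linarith
  have m3: "(-6694325629/5000000000) * u^3 \<le> (16 * p + (-16/3) * p^2 + (1/30) * p^3) * u^3" using c3 assms(3) by (intro mult_right_mono) auto
  have c4: "(-2150436699/10000000000) \<le> ((-8) * 1 + (8/3) * p + (11/30) * p^2 + (-2/15) * p^3 + (-1/1260) * p^4)" using pw by linarith
  have m4: "(-2150436699/10000000000) * u^4 \<le> ((-8) * 1 + (8/3) * p + (11/30) * p^2 + (-2/15) * p^3 + (-1/1260) * p^4) * u^4" using c4 assms(3) by (intro mult_right_mono) auto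
  have c5: "(1432285401/10000000000) \<le> ((-4/5) * p + (4/15) * p^2 + (1/1260) * p^3)" using pw by linarith
  have m5: "(1432285401/10000000000) * u^5 \<le> ((-4/5) * p + (4/15) * p^2 + (1/1260) * p^3) * u^5" using c5 assms(3) by (intro mult_right_mono) auto
  have c6: "(-311484319/10000000000) \<le> ((2/5) * 1 + (-2/15) * p + (11/1260) * p^2 + (-1/315) * p^3)" using pw by linarith
  have m6: "(-311484319/10000000000) * u^6 \<le> ((2/5) * 1 + (-2/15) * p + (11/1260) * p^2 + (-1/315) * p^3) * u^6" using c6 assms(3) by (intro mult_right_mono) auto
  have c7: "(7060737/2500000000) \<le> ((-2/105) * p + (2/315) * p^2)" using pw by linarith
  have m7: "(7060737/2500000000) * u^7 \<le> ((-2/105) * p + (2/315) * p^2) * u^7" using c7 assms(3) by (intro mult_right_mono) auto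
  have c8: "(-899001/2000000000) \<le> ((1/105) * 1 + (-1/315) * p)" using pw by linarith
  have m8: "(-899001/2000000000) * u^8 \<le> ((1/105) * 1 + (-1/315) * p) * u^8" using c8 assms(3) by (intro mult_right_mono) auto
  have K0: "0 < (31015607851/10000000000) * 1 + (-502844143/78125000) * u + (47938533807/10000000000) * u^2 + (-6694325629/5000000000) * u^3 + (-2150436699/10000000000) * u^4 + (1432285401/10000000000) * u^5 + (-311484319/10000000000) * u^6 + (7060737/2500000000) * u^7 + (-899001/2000000000) * u^8" if a: "0 \<le> u" and b: "u \<le> (23/50)" for u :: real
  proof -
    have t0: "0 \<le> u" using a by simp
    have "u \<le> (23/50)" using power_mono[OF b t0, of 1] by (simp add: power_divide)
    note f1 = this
    have "0 \<le> u^2" using power_mono[OF a, of 2] by (simp add: power_divide)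
    note f2 = this
    have "u^3 \<le> (12167/125000)" using power_mono[OF b t0, of 3] by (simp add: power_divide)
    note f3 = this
    have "u^4 \<le> (279841/6250000)" using power_mono[OF b t0, of 4] by (simp add: power_divide)
    note f4 = this
    have "0 \<le> u^5" using power_mono[OF a, of 5] by (simp add: power_divide)
    note f5 = this
    have "u^6 \<le> (148035889/15625000000)" using power_mono[OF b t0, of 6] by (simp add: power_divide)
    note f6 = this
    have "0 \<le> u^7" using power_mono[OF a, of 7] by (simp add: power_divide)
    note f7 = this
    have "u^8 \<le> (78310985281/39062500000000)" using power_mono[OF b t0, of 8] by (simp add: power_divide)
    note f8 = this
    show ?thesis using f1 f2 f3 f4 f5 f6 f7 f8 by linarith
  qed
  have K1: "0 < (31015607851/10000000000) * 1 + (-502844143/78125000) * u + (47938533807/10000000000) * u^2 + (-6694325629/5000000000) * u^3 + (-2150436699/10000000000) * u^4 + (1432285401/10000000000) * u^5 + (-311484319/10000000000) * u^6 + (7060737/2500000000) * u^7 + (-899001/2000000000) * u^8" if a: "(23/50) \<le> u" and b: "u \<le> (1427/2500)" for u :: real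
  proof -
    have t0: "0 \<le> u" using a by simp
    have "u \<le> (1427/2500)" using power_mono[OF b t0, of 1] by (simp add: power_divide)
    note f1 = this
    have "(529/2500) \<le> u^2" using power_mono[OF a, of 2] by (simp add: power_divide)
    note f2 = this
    have "u^3 \<le> (2905841483/15625000000)" using power_mono[OF b t0, of 3] by (simp add: power_divide)
    note f3 = this
    have "u^4 \<le> (4146635796241/39062500000000)" using power_mono[OF b t0, of 4] by (simp add: power_divide)
    note f4 = this
    have "(6436343/312500000) \<le> u^5" using power_mono[OF a, of 5] by (simp add: power_divide)
    note f5 = this
    have "u^6 \<le> (8443914724323639289/244140625000000000000)" using power_mono[OF b t0, of 6] by (simp add: power_divide)
    note f6 = this
    have "(3404825447/781250000000) \<le> u^7" using power_mono[OF a, of 7] by (simp add: power_divide)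
    note f7 = this
    have "u^8 \<le> (17194588426667232069730081/1525878906250000000000000000)" using power_mono[OF b t0, of 8] by (simp add: power_divide)
    note f8 = this
    show ?thesis using f1 f2 f3 f4 f5 f6 f7 f8 by linarith
  qed
  have J0: "0 < (31015607851/10000000000) * 1 + (-502844143/78125000) * u + (47938533807/10000000000) * u^2 + (-6694325629/5000000000) * u^3 + (-2150436699/10000000000) * u^4 + (1432285401/10000000000) * u^5 + (-311484319/10000000000) * u^6 + (7060737/2500000000) * u^7 + (-899001/2000000000) * u^8" if "u \<le> (23/50)" using K0[of u] assms(3) that by simp
  have J1: "0 < (31015607851/10000000000) * 1 + (-502844143/78125000) * u + (47938533807/10000000000) * u^2 + (-6694325629/5000000000) * u^3 + (-2150436699/10000000000) * u^4 + (1432285401/10000000000) * u^5 + (-311484319/10000000000) * u^6 + (7060737/2500000000) * u^7 + (-899001/2000000000) * u^8" if "u \<le> (1427/2500)" using J0 K1[of u] that by (meson linorder_le_cases)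
  have "0 < (31015607851/10000000000) * 1 + (-502844143/78125000) * u + (47938533807/10000000000) * u^2 + (-6694325629/5000000000) * u^3 + (-2150436699/10000000000) * u^4 + (1432285401/10000000000) * u^5 + (-311484319/10000000000) * u^6 + (7060737/2500000000) * u^7 + (-899001/2000000000) * u^8" using J1 assms(4) by simp
  then show ?thesis unfolding QB1_def using m0 m1 m2 m3 m4 m5 m6 m7 m8 by linarith
qed

definition QB2 :: "real \<Rightarrow> real \<Rightarrow> real" where "QB2 p u = (((-56) * p^3 + 8 * p^4 + 1 * p^6) * 1 + (192 * p^2 + (-8) * p^3 + (-4/3) * p^4 + (-5) * p^5) * u + ((-256) * p + (32/3) * p^3 + (20/3) * p^4 + (-1/6) * p^6) * u^2 + (128 * 1 + (-32) * p^2 + (-8/3) * p^3 + (1/15) * p^4 + (5/6) * p^5) * u^3 + ((128/3) * p + (-8/15) * p^3 + (-19/15) * p^4 + (1/120) * p^6) * u^4 + ((-64/3) * 1 + (8/5) * p^2 + (3/5) * p^3 + (-1/630) * p^4 + (-1/24) * p^5) * u^5 + ((-32/15) * p + (4/315) * p^3 + (41/630) * p^4 + (-1/5040) * p^6) * u^6 + ((16/15) * 1 + (-4/105) * p^2 + (-2/63) * p^3 + (1/1008) * p^5) * u^7 + ((16/315) * p + (-1/630) * p^4) * u^8 + ((-8/315) * 1 + (1/1260) * p^3) * u^9)"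

lemma QB2pos:
  fixes p u :: real
  assumes "3.141592653588 \<le> p" "p \<le> 3.1415926535899" "0 \<le> u" "u \<le> (1427/2500)"
  shows "0 < QB2 p u"
proof -
  note pw = pipow[OF assms(1,2)]
  have c0: "(10776069363/2500000000) \<le> ((-56) * p^3 + 8 * p^4 + 1 * p^6)" using pw by linarith
  have m0: "(10776069363/2500000000) * 1 \<le> ((-56) * p^3 + 8 * p^4 + 1 * p^6) * 1" using c0 assms(3) by (intro mult_right_mono) auto
  have c1: "(-5225352163/400000000) \<le> (192 * p^2 + (-8) * p^3 + (-4/3) * p^4 + (-5) * p^5)" using pw by linarith
  have m1: "(-5225352163/400000000) * u \<le> (192 * p^2 + (-8) * p^3 + (-4/3) * p^4 + (-5) * p^5) * u" using c1 assms(3) by (intro mult_right_mono) auto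
  have c2: "(78241532831/5000000000) \<le> ((-256) * p + (32/3) * p^3 + (20/3) * p^4 + (-1/6) * p^6)" using pw by linarith
  have m2: "(78241532831/5000000000) * u^2 \<le> ((-256) * p + (32/3) * p^3 + (20/3) * p^4 + (-1/6) * p^6) * u^2" using c2 assms(3) by (intro mult_right_mono) auto
  have c3: "(-18000803853/2000000000) \<le> (128 * 1 + (-32) * p^2 + (-8/3) * p^3 + (1/15) * p^4 + (5/6) * p^5)" using pw by linarith
  have m3: "(-18000803853/2000000000) * u^3 \<le> (128 * 1 + (-32) * p^2 + (-8/3) * p^3 + (1/15) * p^4 + (5/6) * p^5) * u^3" using c3 assms(3) by (intro mult_right_mono) auto
  have c4: "(21313336269/10000000000) \<le> ((128/3) * p + (-8/15) * p^3 + (-19/15) * p^4 + (1/120) * p^6)" using pw by linarith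
  have m4: "(21313336269/10000000000) * u^4 \<le> ((128/3) * p + (-8/15) * p^3 + (-19/15) * p^4 + (1/120) * p^6) * u^4" using c4 assms(3) by (intro mult_right_mono) auto
  have c5: "(1563619123/10000000000) \<le> ((-64/3) * 1 + (8/5) * p^2 + (3/5) * p^3 + (-1/630) * p^4 + (-1/24) * p^5)" using pw by linarith
  have m5: "(1563619123/10000000000) * u^5 \<le> ((-64/3) * 1 + (8/5) * p^2 + (3/5) * p^3 + (-1/630) * p^4 + (-1/24) * p^5) * u^5" using c5 assms(3) by (intro mult_right_mono) auto
  have c6: "(-1597638569/10000000000) \<le> ((-32/15) * p + (4/315) * p^3 + (41/630) * p^4 + (-1/5040) * p^6)" using pw by linarith
  have m6: "(-1597638569/10000000000) * u^6 \<le> ((-32/15) * p + (4/315) * p^3 + (41/630) * p^4 + (-1/5040) * p^6) * u^6" using c6 assms(3) by (intro mult_right_mono) auto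
  have c7: "(12433063/1250000000) \<le> ((16/15) * 1 + (-4/105) * p^2 + (-2/63) * p^3 + (1/1008) * p^5)" using pw by linarith
  have m7: "(12433063/1250000000) * u^7 \<le> ((16/15) * 1 + (-4/105) * p^2 + (-2/63) * p^3 + (1/1008) * p^5) * u^7" using c7 assms(3) by (intro mult_right_mono) auto
  have c8: "(49553553/10000000000) \<le> ((16/315) * p + (-1/630) * p^4)" using pw by linarith
  have m8: "(49553553/10000000000) * u^8 \<le> ((16/315) * p + (-1/630) * p^4) * u^8" using c8 assms(3) by (intro mult_right_mono) auto
  have c9: "(-3943347/5000000000) \<le> ((-8/315) * 1 + (1/1260) * p^3)" using pw by linarith
  have m9: "(-3943347/5000000000) * u^9 \<le> ((-8/315) * 1 + (1/1260) * p^3) * u^9" using c9 assms(3) by (intro mult_right_mono) auto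
  have K0: "0 < (10776069363/2500000000) * 1 + (-5225352163/400000000) * u + (78241532831/5000000000) * u^2 + (-18000803853/2000000000) * u^3 + (21313336269/10000000000) * u^4 + (1563619123/10000000000) * u^5 + (-1597638569/10000000000) * u^6 + (12433063/1250000000) * u^7 + (49553553/10000000000) * u^8 + (-3943347/5000000000) * u^9" if a: "0 \<le> u" and b: "u \<le> (61/200)" for u :: real
  proof -
    have t0: "0 \<le> u" using a by simp
    have "u \<le> (61/200)" using power_mono[OF b t0, of 1] by (simp add: power_divide)
    note f1 = this
    have "0 \<le> u^2" using power_mono[OF a, of 2] by (simp add: power_divide)
    note f2 = this
    have "u^3 \<le> (226981/8000000)" using power_mono[OF b t0, of 3] by (simp add: power_divide)
    note f3 = this
    have "0 \<le> u^4" using power_mono[OF a, of 4] by (simp add: power_divide)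
    note f4 = this
    have "0 \<le> u^5" using power_mono[OF a, of 5] by (simp add: power_divide)
    note f5 = this
    have "u^6 \<le> (51520374361/64000000000000)" using power_mono[OF b t0, of 6] by (simp add: power_divide)
    note f6 = this
    have "0 \<le> u^7" using power_mono[OF a, of 7] by (simp add: power_divide)
    note f7 = this
    have "0 \<le> u^8" using power_mono[OF a, of 8] by (simp add: power_divide)
    note f8 = this
    have "u^9 \<le> (11694146092834141/512000000000000000000)" using power_mono[OF b t0, of 9] by (simp add: power_divide)
    note f9 = this
    show ?thesis using f1 f2 f3 f4 f5 f6 f7 f8 f9 by linarith
  qed
  have K1: "0 < (10776069363/2500000000) * 1 + (-5225352163/400000000) * u + (78241532831/5000000000) * u^2 + (-18000803853/2000000000) * u^3 + (21313336269/10000000000) * u^4 + (1563619123/10000000000) * u^5 + (-1597638569/10000000000) * u^6 + (12433063/1250000000) * u^7 + (49553553/10000000000) * u^8 + (-3943347/5000000000) * u^9" if a: "(61/200) \<le> u" and b: "u \<le> (79/200)" for u :: real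
  proof -
    have t0: "0 \<le> u" using a by simp
    have "u \<le> (79/200)" using power_mono[OF b t0, of 1] by (simp add: power_divide)
    note f1 = this
    have "(3721/40000) \<le> u^2" using power_mono[OF a, of 2] by (simp add: power_divide)
    note f2 = this
    have "u^3 \<le> (493039/8000000)" using power_mono[OF b t0, of 3] by (simp add: power_divide)
    note f3 = this
    have "(13845841/1600000000) \<le> u^4" using power_mono[OF a, of 4] by (simp add: power_divide)
    note f4 = this
    have "(844596301/320000000000) \<le> u^5" using power_mono[OF a, of 5] by (simp add: power_divide)
    note f5 = this
    have "u^6 \<le> (243087455521/64000000000000)" using power_mono[OF b t0, of 6] by (simp add: power_divide)
    note f6 = this
    have "(3142742836021/12800000000000000) \<le> u^7" using power_mono[OF a, of 7] by (simp add: power_divide)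
    note f7 = this
    have "(191707312997281/2560000000000000000) \<le> u^8" using power_mono[OF a, of 8] by (simp add: power_divide)
    note f8 = this
    have "u^9 \<le> (119851595982618319/512000000000000000000)" using power_mono[OF b t0, of 9] by (simp add: power_divide)
    note f9 = this
    show ?thesis using f1 f2 f3 f4 f5 f6 f7 f8 f9 by linarith
  qed
  have K2: "0 < (10776069363/2500000000) * 1 + (-5225352163/400000000) * u + (78241532831/5000000000) * u^2 + (-18000803853/2000000000) * u^3 + (21313336269/10000000000) * u^4 + (1563619123/10000000000) * u^5 + (-1597638569/10000000000) * u^6 + (12433063/1250000000) * u^7 + (49553553/10000000000) * u^8 + (-3943347/5000000000) * u^9" if a: "(79/200) \<le> u" and b: "u \<le> (91/200)" for u :: real
  proof -
    have t0: "0 \<le> u" using a by simp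
    have "u \<le> (91/200)" using power_mono[OF b t0, of 1] by (simp add: power_divide)
    note f1 = this
    have "(6241/40000) \<le> u^2" using power_mono[OF a, of 2] by (simp add: power_divide)
    note f2 = this
    have "u^3 \<le> (753571/8000000)" using power_mono[OF b t0, of 3] by (simp add: power_divide)
    note f3 = this
    have "(38950081/1600000000) \<le> u^4" using power_mono[OF a, of 4] by (simp add: power_divide)
    note f4 = this
    have "(3077056399/320000000000) \<le> u^5" using power_mono[OF a, of 5] by (simp add: power_divide)
    note f5 = this
    have "u^6 \<le> (567869252041/64000000000000)" using power_mono[OF b t0, of 6] by (simp add: power_divide)
    note f6 = this
    have "(19203908986159/12800000000000000) \<le> u^7" using power_mono[OF a, of 7] by (simp add: power_divide)
    note f7 = this
    have "(1517108809906561/2560000000000000000) \<le> u^8" using power_mono[OF a, of 8] by (simp add: power_divide)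
    note f8 = this
    have "u^9 \<le> (427929800129788411/512000000000000000000)" using power_mono[OF b t0, of 9] by (simp add: power_divide)
    note f9 = this
    show ?thesis using f1 f2 f3 f4 f5 f6 f7 f8 f9 by linarith
  qed
  have K3: "0 < (10776069363/2500000000) * 1 + (-5225352163/400000000) * u + (78241532831/5000000000) * u^2 + (-18000803853/2000000000) * u^3 + (21313336269/10000000000) * u^4 + (1563619123/10000000000) * u^5 + (-1597638569/10000000000) * u^6 + (12433063/1250000000) * u^7 + (49553553/10000000000) * u^8 + (-3943347/5000000000) * u^9" if a: "(91/200) \<le> u" and b: "u \<le> (99/200)" for u :: real
  proof -
    have t0: "0 \<le> u" using a by simp
    have "u \<le> (99/200)" using power_mono[OF b t0, of 1] by (simp add: power_divide)
    note f1 = this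
    have "(8281/40000) \<le> u^2" using power_mono[OF a, of 2] by (simp add: power_divide)
    note f2 = this
    have "u^3 \<le> (970299/8000000)" using power_mono[OF b t0, of 3] by (simp add: power_divide)
    note f3 = this
    have "(68574961/1600000000) \<le> u^4" using power_mono[OF a, of 4] by (simp add: power_divide)
    note f4 = this
    have "(6240321451/320000000000) \<le> u^5" using power_mono[OF a, of 5] by (simp add: power_divide)
    note f5 = this
    have "u^6 \<le> (941480149401/64000000000000)" using power_mono[OF b t0, of 6] by (simp add: power_divide)
    note f6 = this
    have "(51676101935731/12800000000000000) \<le> u^7" using power_mono[OF a, of 7] by (simp add: power_divide)
    note f7 = this
    have "(4702525276151521/2560000000000000000) \<le> u^8" using power_mono[OF a, of 8] by (simp add: power_divide)
    note f8 = this
    have "u^9 \<le> (913517247483640899/512000000000000000000)" using power_mono[OF b t0, of 9] by (simp add: power_divide)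
    note f9 = this
    show ?thesis using f1 f2 f3 f4 f5 f6 f7 f8 f9 by linarith
  qed
  have K4: "0 < (10776069363/2500000000) * 1 + (-5225352163/400000000) * u + (78241532831/5000000000) * u^2 + (-18000803853/2000000000) * u^3 + (21313336269/10000000000) * u^4 + (1563619123/10000000000) * u^5 + (-1597638569/10000000000) * u^6 + (12433063/1250000000) * u^7 + (49553553/10000000000) * u^8 + (-3943347/5000000000) * u^9" if a: "(99/200) \<le> u" and b: "u \<le> (53/100)" for u :: real
  proof -
    have t0: "0 \<le> u" using a by simp
    have "u \<le> (53/100)" using power_mono[OF b t0, of 1] by (simp add: power_divide)
    note f1 = this
    have "(9801/40000) \<le> u^2" using power_mono[OF a, of 2] by (simp add: power_divide)
    note f2 = this
    have "u^3 \<le> (148877/1000000)" using power_mono[OF b t0, of 3] by (simp add: power_divide)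
    note f3 = this
    have "(96059601/1600000000) \<le> u^4" using power_mono[OF a, of 4] by (simp add: power_divide)
    note f4 = this
    have "(9509900499/320000000000) \<le> u^5" using power_mono[OF a, of 5] by (simp add: power_divide)
    note f5 = this
    have "u^6 \<le> (22164361129/1000000000000)" using power_mono[OF b t0, of 6] by (simp add: power_divide)
    note f6 = this
    have "(93206534790699/12800000000000000) \<le> u^7" using power_mono[OF a, of 7] by (simp add: power_divide)
    note f7 = this
    have "(9227446944279201/2560000000000000000) \<le> u^8" using power_mono[OF a, of 8] by (simp add: power_divide)
    note f8 = this
    have "u^9 \<le> (3299763591802133/1000000000000000000)" using power_mono[OF b t0, of 9] by (simp add: power_divide)
    note f9 = this
    show ?thesis using f1 f2 f3 f4 f5 f6 f7 f8 f9 by linarith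
  qed
  have K5: "0 < (10776069363/2500000000) * 1 + (-5225352163/400000000) * u + (78241532831/5000000000) * u^2 + (-18000803853/2000000000) * u^3 + (21313336269/10000000000) * u^4 + (1563619123/10000000000) * u^5 + (-1597638569/10000000000) * u^6 + (12433063/1250000000) * u^7 + (49553553/10000000000) * u^8 + (-3943347/5000000000) * u^9" if a: "(53/100) \<le> u" and b: "u \<le> (111/200)" for u :: real
  proof -
    have t0: "0 \<le> u" using a by simp
    have "u \<le> (111/200)" using power_mono[OF b t0, of 1] by (simp add: power_divide)
    note f1 = this
    have "(2809/10000) \<le> u^2" using power_mono[OF a, of 2] by (simp add: power_divide)
    note f2 = this
    have "u^3 \<le> (1367631/8000000)" using power_mono[OF b t0, of 3] by (simp add: power_divide)
    note f3 = this
    have "(7890481/100000000) \<le> u^4" using power_mono[OF a, of 4] by (simp add: power_divide)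
    note f4 = this
    have "(418195493/10000000000) \<le> u^5" using power_mono[OF a, of 5] by (simp add: power_divide)
    note f5 = this
    have "u^6 \<le> (1870414552161/64000000000000)" using power_mono[OF b t0, of 6] by (simp add: power_divide)
    note f6 = this
    have "(1174711139837/100000000000000) \<le> u^7" using power_mono[OF a, of 7] by (simp add: power_divide)
    note f7 = this
    have "(62259690411361/10000000000000000) \<le> u^8" using power_mono[OF a, of 8] by (simp add: power_divide)
    note f8 = this
    have "u^9 \<le> (2558036924386500591/512000000000000000000)" using power_mono[OF b t0, of 9] by (simp add: power_divide)
    note f9 = this
    show ?thesis using f1 f2 f3 f4 f5 f6 f7 f8 f9 by linarith
  qed
  have K6: "0 < (10776069363/2500000000) * 1 + (-5225352163/400000000) * u + (78241532831/5000000000) * u^2 + (-18000803853/2000000000) * u^3 + (21313336269/10000000000) * u^4 + (1563619123/10000000000) * u^5 + (-1597638569/10000000000) * u^6 + (12433063/1250000000) * u^7 + (49553553/10000000000) * u^8 + (-3943347/5000000000) * u^9" if a: "(111/200) \<le> u" and b: "u \<le> (1427/2500)" for u :: real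
  proof -
    have t0: "0 \<le> u" using a by simp
    have "u \<le> (1427/2500)" using power_mono[OF b t0, of 1] by (simp add: power_divide)
    note f1 = this
    have "(12321/40000) \<le> u^2" using power_mono[OF a, of 2] by (simp add: power_divide)
    note f2 = this
    have "u^3 \<le> (2905841483/15625000000)" using power_mono[OF b t0, of 3] by (simp add: power_divide)
    note f3 = this
    have "(151807041/1600000000) \<le> u^4" using power_mono[OF a, of 4] by (simp add: power_divide)
    note f4 = this
    have "(16850581551/320000000000) \<le> u^5" using power_mono[OF a, of 5] by (simp add: power_divide)
    note f5 = this
    have "u^6 \<le> (8443914724323639289/244140625000000000000)" using power_mono[OF b t0, of 6] by (simp add: power_divide)
    note f6 = this
    have "(207616015289871/12800000000000000) \<le> u^7" using power_mono[OF a, of 7] by (simp add: power_divide)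
    note f7 = this
    have "(23045377697175681/2560000000000000000) \<le> u^8" using power_mono[OF a, of 8] by (simp add: power_divide)
    note f8 = this
    have "u^9 \<le> (24536677684854140163504825587/3814697265625000000000000000000)" using power_mono[OF b t0, of 9] by (simp add: power_divide)
    note f9 = this
    show ?thesis using f1 f2 f3 f4 f5 f6 f7 f8 f9 by linarith
  qed
  have J0: "0 < (10776069363/2500000000) * 1 + (-5225352163/400000000) * u + (78241532831/5000000000) * u^2 + (-18000803853/2000000000) * u^3 + (21313336269/10000000000) * u^4 + (1563619123/10000000000) * u^5 + (-1597638569/10000000000) * u^6 + (12433063/1250000000) * u^7 + (49553553/10000000000) * u^8 + (-3943347/5000000000) * u^9" if "u \<le> (61/200)" using K0[of u] assms(3) that by simp
  have J1: "0 < (10776069363/2500000000) * 1 + (-5225352163/400000000) * u + (78241532831/5000000000) * u^2 + (-18000803853/2000000000) * u^3 + (21313336269/10000000000) * u^4 + (1563619123/10000000000) * u^5 + (-1597638569/10000000000) * u^6 + (12433063/1250000000) * u^7 + (49553553/10000000000) * u^8 + (-3943347/5000000000) * u^9" if "u \<le> (79/200)" using J0 K1[of u] that by (meson linorder_le_cases)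
  have J2: "0 < (10776069363/2500000000) * 1 + (-5225352163/400000000) * u + (78241532831/5000000000) * u^2 + (-18000803853/2000000000) * u^3 + (21313336269/10000000000) * u^4 + (1563619123/10000000000) * u^5 + (-1597638569/10000000000) * u^6 + (12433063/1250000000) * u^7 + (49553553/10000000000) * u^8 + (-3943347/5000000000) * u^9" if "u \<le> (91/200)" using J1 K2[of u] that by (meson linorder_le_cases)
  have J3: "0 < (10776069363/2500000000) * 1 + (-5225352163/400000000) * u + (78241532831/5000000000) * u^2 + (-18000803853/2000000000) * u^3 + (21313336269/10000000000) * u^4 + (1563619123/10000000000) * u^5 + (-1597638569/10000000000) * u^6 + (12433063/1250000000) * u^7 + (49553553/10000000000) * u^8 + (-3943347/5000000000) * u^9" if "u \<le> (99/200)" using J2 K3[of u] that by (meson linorder_le_cases)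
  have J4: "0 < (10776069363/2500000000) * 1 + (-5225352163/400000000) * u + (78241532831/5000000000) * u^2 + (-18000803853/2000000000) * u^3 + (21313336269/10000000000) * u^4 + (1563619123/10000000000) * u^5 + (-1597638569/10000000000) * u^6 + (12433063/1250000000) * u^7 + (49553553/10000000000) * u^8 + (-3943347/5000000000) * u^9" if "u \<le> (53/100)" using J3 K4[of u] that by (meson linorder_le_cases)
  have J5: "0 < (10776069363/2500000000) * 1 + (-5225352163/400000000) * u + (78241532831/5000000000) * u^2 + (-18000803853/2000000000) * u^3 + (21313336269/10000000000) * u^4 + (1563619123/10000000000) * u^5 + (-1597638569/10000000000) * u^6 + (12433063/1250000000) * u^7 + (49553553/10000000000) * u^8 + (-3943347/5000000000) * u^9" if "u \<le> (111/200)" using J4 K5[of u] that by (meson linorder_le_cases)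
  have J6: "0 < (10776069363/2500000000) * 1 + (-5225352163/400000000) * u + (78241532831/5000000000) * u^2 + (-18000803853/2000000000) * u^3 + (21313336269/10000000000) * u^4 + (1563619123/10000000000) * u^5 + (-1597638569/10000000000) * u^6 + (12433063/1250000000) * u^7 + (49553553/10000000000) * u^8 + (-3943347/5000000000) * u^9" if "u \<le> (1427/2500)" using J5 K6[of u] that by (meson linorder_le_cases)
  have "0 < (10776069363/2500000000) * 1 + (-5225352163/400000000) * u + (78241532831/5000000000) * u^2 + (-18000803853/2000000000) * u^3 + (21313336269/10000000000) * u^4 + (1563619123/10000000000) * u^5 + (-1597638569/10000000000) * u^6 + (12433063/1250000000) * u^7 + (49553553/10000000000) * u^8 + (-3943347/5000000000) * u^9" using J6 assms(4) by simp
  then show ?thesis unfolding QB2_def using m0 m1 m2 m3 m4 m5 m6 m7 m8 m9 by linarith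
qed

lemma scale_id1: "k \<noteq> 0 \<Longrightarrow> c = C/k \<Longrightarrow> C*N - k*Y = t*Q \<Longrightarrow> c*N - Y = t*(Q/k)" for k c C N Y t Q :: real
  by (simp add: field_simps)

lemma scale_id2: "k \<noteq> 0 \<Longrightarrow> c = C/k \<Longrightarrow> k*Y - C*N = t*Q \<Longrightarrow> Y - c*N = t*(Q/k)" for k c C N Y t Q :: real
  by (simp add: field_simps)

lemma QA1d: "QA1 p t = (((-1128960) * p^2 + 161280 * p^3 + 20160 * p^5) * 1 + (1935360 * 1 + (-645120) * p + 564480 * p^2 + (-161280) * p^3 + (-1680) * p^5) * t^2 + ((-967680) * 1 + 322560 * p + (-47040) * p^2 + 13440 * p^3 + 56 * p^5) * t^4 + (80640 * 1 + (-26880) * p + 1568 * p^2 + (-448) * p^3 + (-1) * p^5) * t^6 + ((-2688) * 1 + 896 * p + (-28) * p^2 + 8 * p^3) * t^8 + (48 * 1 + (-16) * p) * t^10) / 40320" for p t :: real unfolding QA1_def by (simp add: field_simps)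
lemma IA1i: "40320*(p^3*(p^2-4*t^2)) - (40320*1 + (-20160)*t^2 + 1680*t^4 + (-56)*t^6 + 1*t^8) * (p^5 + (28*p^2-8*p^3)*t^2 + (16*p-48)*t^4) = t^2 * (((-1128960) * p^2 + 161280 * p^3 + 20160 * p^5) * 1 + (1935360 * 1 + (-645120) * p + 564480 * p^2 + (-161280) * p^3 + (-1680) * p^5) * t^2 + ((-967680) * 1 + 322560 * p + (-47040) * p^2 + 13440 * p^3 + 56 * p^5) * t^4 + (80640 * 1 + (-26880) * p + 1568 * p^2 + (-448) * p^3 + (-1) * p^5) * t^6 + ((-2688) * 1 + 896 * p + (-28) * p^2 + 8 * p^3) * t^8 + (48 * 1 + (-16) * p) * t^10)" for p t :: real by algebra
lemma IA1: "p^3*(p^2-4*t^2) - (1 - t^2/2 + t^4/24 - t^6/720 + t^8/40320) * (p^5 + (28*p^2-8*p^3)*t^2 + (16*p-48)*t^4) = t^2 * QA1 p t" for p t :: real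
  unfolding QA1d by (rule scale_id2[OF _ _ IA1i]) (simp_all add: field_simps)

lemma QA2d: "QA2 p t = ((5160960 * 1 + (-16800) * p^5) * 1 + ((-2580480) * 1 + 67200 * p^3 + 1568 * p^5) * t^2 + (215040 * 1 + (-6272) * p^3 + (-58) * p^5) * t^4 + ((-7168) * 1 + 232 * p^3 + (-1) * p^5) * t^6 + ((-128) * 1 + 4 * p^3) * t^8) / 40320" for p t :: real unfolding QA2_def by (simp add: field_simps)
lemma IA2i: "(40320*1 + (-20160)*t^2 + 1680*t^4 + (-56)*t^6 + (-1)*t^8) * (2*p^5 - (8*p^3 - p^5)*t^2 - (4*p^3-128)*t^4) - 40320*(2*p^3*(p^2-4*t^2)) = t^4 * ((5160960 * 1 + (-16800) * p^5) * 1 + ((-2580480) * 1 + 67200 * p^3 + 1568 * p^5) * t^2 + (215040 * 1 + (-6272) * p^3 + (-58) * p^5) * t^4 + ((-7168) * 1 + 232 * p^3 + (-1) * p^5) * t^6 + ((-128) * 1 + 4 * p^3) * t^8)" for p t :: real by algebra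
lemma IA2: "(1 - t^2/2 + t^4/24 - t^6/720 - t^8/40320) * (2*p^5 - (8*p^3 - p^5)*t^2 - (4*p^3-128)*t^4) - 2*p^3*(p^2-4*t^2) = t^4 * QA2 p t" for p t :: real
  unfolding QA2d by (rule scale_id1[OF _ _ IA2i]) (simp_all add: field_simps)

lemma QB1d: "QB1 p u = ((221760 * p^2 + (-80640) * p^3 + 3360 * p^4) * 1 + ((-483840) * p + 161280 * p^2 + (-3360) * p^3) * u + (241920 * 1 + (-80640) * p + (-36960) * p^2 + 13440 * p^3 + (-168) * p^4) * u^2 + (80640 * p + (-26880) * p^2 + 168 * p^3) * u^3 + ((-40320) * 1 + 13440 * p + 1848 * p^2 + (-672) * p^3 + (-4) * p^4) * u^4 + ((-4032) * p + 1344 * p^2 + 4 * p^3) * u^5 + (2016 * 1 + (-672) * p + 44 * p^2 + (-16) * p^3) * u^6 + ((-96) * p + 32 * p^2) * u^7 + (48 * 1 + (-16) * p) * u^8) / 5040" for p u :: real unfolding QB1_def by (simp add: field_simps)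
lemma IB1i: "5040*(p^3*(4*u*(p-u))) - (5040*u + (-840)*u^3 + 42*u^5 + 1*u^7) * (p^5 + (28*p^2-8*p^3)*w^2 + (16*p-48)*w^4) = u^3 * ((221760 * p^2 + (-80640) * p^3 + 3360 * p^4) * 1 + ((-483840) * p + 161280 * p^2 + (-3360) * p^3) * u + (241920 * 1 + (-80640) * p + (-36960) * p^2 + 13440 * p^3 + (-168) * p^4) * u^2 + (80640 * p + (-26880) * p^2 + 168 * p^3) * u^3 + ((-40320) * 1 + 13440 * p + 1848 * p^2 + (-672) * p^3 + (-4) * p^4) * u^4 + ((-4032) * p + 1344 * p^2 + 4 * p^3) * u^5 + (2016 * 1 + (-672) * p + 44 * p^2 + (-16) * p^3) * u^6 + ((-96) * p + 32 * p^2) * u^7 + (48 * 1 + (-16) * p) * u^8)" if "2*w = p - 2*u" for p u w :: real using that by algebra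
lemma IB1: "p^3*(4*u*(p-u)) - (u - u^3/6 + u^5/120 + u^7/5040) * (p^5 + (28*p^2-8*p^3)*w^2 + (16*p-48)*w^4) = u^3 * QB1 p u" if "2*w = p - 2*u" for p u w :: real
  unfolding QB1d by (rule scale_id2[OF _ _ IB1i[OF that]]) (simp_all add: field_simps)

lemma QB2d: "QB2 p u = (((-282240) * p^3 + 40320 * p^4 + 5040 * p^6) * 1 + (967680 * p^2 + (-40320) * p^3 + (-6720) * p^4 + (-25200) * p^5) * u + ((-1290240) * p + 53760 * p^3 + 33600 * p^4 + (-840) * p^6) * u^2 + (645120 * 1 + (-161280) * p^2 + (-13440) * p^3 + 336 * p^4 + 4200 * p^5) * u^3 + (215040 * p + (-2688) * p^3 + (-6384) * p^4 + 42 * p^6) * u^4 + ((-107520) * 1 + 8064 * p^2 + 3024 * p^3 + (-8) * p^4 + (-210) * p^5) * u^5 + ((-10752) * p + 64 * p^3 + 328 * p^4 + (-1) * p^6) * u^6 + (5376 * 1 + (-192) * p^2 + (-160) * p^3 + 5 * p^5) * u^7 + (256 * p + (-8) * p^4) * u^8 + ((-128) * 1 + 4 * p^3) * u^9) / 5040" for p u :: real unfolding QB2_def by (simp add: field_simps)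
lemma IB2i: "(5040*u + (-840)*u^3 + 42*u^5 + (-1)*u^7) * (2*p^5 - (8*p^3 - p^5)*w^2 - (4*p^3-128)*w^4) - 5040*(2*p^3*(4*u*(p-u))) = u^2 * (((-282240) * p^3 + 40320 * p^4 + 5040 * p^6) * 1 + (967680 * p^2 + (-40320) * p^3 + (-6720) * p^4 + (-25200) * p^5) * u + ((-1290240) * p + 53760 * p^3 + 33600 * p^4 + (-840) * p^6) * u^2 + (645120 * 1 + (-161280) * p^2 + (-13440) * p^3 + 336 * p^4 + 4200 * p^5) * u^3 + (215040 * p + (-2688) * p^3 + (-6384) * p^4 + 42 * p^6) * u^4 + ((-107520) * 1 + 8064 * p^2 + 3024 * p^3 + (-8) * p^4 + (-210) * p^5) * u^5 + ((-10752) * p + 64 * p^3 + 328 * p^4 + (-1) * p^6) * u^6 + (5376 * 1 + (-192) * p^2 + (-160) * p^3 + 5 * p^5) * u^7 + (256 * p + (-8) * p^4) * u^8 + ((-128) * 1 + 4 * p^3) * u^9)" if "2*w = p - 2*u" for p u w :: real using that by algebra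
lemma IB2: "(u - u^3/6 + u^5/120 - u^7/5040) * (2*p^5 - (8*p^3 - p^5)*w^2 - (4*p^3-128)*w^4) - 2*p^3*(4*u*(p-u)) = u^2 * QB2 p u" if "2*w = p - 2*u" for p u w :: real
  unfolding QB2d by (rule scale_id1[OF _ _ IB2i[OF that]]) (simp_all add: field_simps)
lemma pi_bnds: "3.141592653588 \<le> pi" "pi \<le> 3.1415926535899"
  using pi_approx by auto

lemma refl_two: "2*(pi/2-u) = pi - 2*u" for u :: real by simp

lemma cos_bnd:
  fixes t :: real assumes "0 < t"
  shows "\<bar>cos t - (1 - t^2/2 + t^4/24 - t^6/720)\<bar> \<le> t^8/40320"
proof -
  obtain s where s: "cos t = (\<Sum>m<8. cos_coeff m * t ^ m) + (cos (s + 1/2 * real 8 * pi) / fact 8) * t ^ 8"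
    using Maclaurin_cos_expansion2[OF assms, of 8] by auto
  have sum: "(\<Sum>m<8. cos_coeff m * t ^ m) = 1 - t^2/2 + t^4/24 - t^6/720"
    by (simp add: cos_coeff_def lessThan_nat_numeral fact_numeral)
  have "\<bar>cos (s + 1/2 * real 8 * pi) / fact 8 * t ^ 8\<bar> \<le> 1 / fact 8 * t^8"
    using assms by (simp add: abs_mult divide_le_cancel)
  then show ?thesis using s sum by (simp add: fact_numeral)
qed

lemma sin_bnd:
  fixes u :: real assumes "0 < u"
  shows "\<bar>sin u - (u - u^3/6 + u^5/120)\<bar> \<le> u^7/5040"
proof -
  have sum: "(\<Sum>m<7. sin_coeff m * u ^ m) = u - u^3/6 + u^5/120"
    by (simp add: sin_coeff_def lessThan_nat_numeral fact_numeral)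
  have f: "inverse (fact 7 :: real) * \<bar>u\<bar>^7 = u^7/5040"
    using assms by (simp add: fact_numeral field_simps)
  show ?thesis using Maclaurin_sin_bound[of u 7] unfolding sum f .
qed
lemma N1pos: fixes t :: real shows "0 < pi^5 + (28*pi^2-8*pi^3)*t^2 + (16*pi-48)*t^4"
proof -
  note pw = pipow[OF pi_bnds]
  have "0 < 28*pi^2-8*pi^3" "0 < 16*pi-48" "0 < pi^5" using pw by linarith+
  then show ?thesis by (intro add_pos_nonneg) auto
qed

lemma N2pos: fixes t :: real shows "0 < 2*pi^5 - (8*pi^3 - pi^5)*t^2 - (4*pi^3-128)*t^4"
proof -
  note pw = pipow[OF pi_bnds]
  have "0 < -(8*pi^3 - pi^5)" "0 < -(4*pi^3-128)" "0 < 2*pi^5" using pw by linarith+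
  then have "0 < 2*pi^5 + (-(8*pi^3 - pi^5))*t^2 + (-(4*pi^3-128))*t^4" by (intro add_pos_nonneg) auto
  moreover have "2*pi^5 + (-(8*pi^3 - pi^5))*t^2 + (-(4*pi^3-128))*t^4 = 2*pi^5 - (8*pi^3 - pi^5)*t^2 - (4*pi^3-128)*t^4" by algebra
  ultimately show ?thesis by linarith
qed

lemma lowA:
  fixes t :: real assumes "0 < t" "t \<le> 1"
  shows "cos t * (pi^5 + (28*pi^2-8*pi^3)*t^2 + (16*pi-48)*t^4) < pi^3*(pi^2-4*t^2)"
proof -
  have c: "cos t \<le> 1 - t^2/2 + t^4/24 - t^6/720 + t^8/40320" using cos_bnd[OF assms(1)] by linarith
  have N: "0 < pi^5 + (28*pi^2-8*pi^3)*t^2 + (16*pi-48)*t^4" by (rule N1pos)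
  have Q: "0 < t^2 * QA1 pi t"
    using QA1pos[OF pi_bnds, of t] assms by simp
  have "pi^3*(pi^2-4*t^2) - (1 - t^2/2 + t^4/24 - t^6/720 + t^8/40320) * (pi^5 + (28*pi^2-8*pi^3)*t^2 + (16*pi-48)*t^4) > 0"
    using IA1[of pi t] Q by linarith
  moreover have "cos t * (pi^5 + (28*pi^2-8*pi^3)*t^2 + (16*pi-48)*t^4) \<le> (1 - t^2/2 + t^4/24 - t^6/720 + t^8/40320) * (pi^5 + (28*pi^2-8*pi^3)*t^2 + (16*pi-48)*t^4)"
    using c N by (intro mult_right_mono) auto
  ultimately show ?thesis by linarith
qed

lemma upA:
  fixes t :: real assumes "0 < t" "t \<le> 1"
  shows "2*pi^3*(pi^2-4*t^2) < cos t * (2*pi^5 - (8*pi^3 - pi^5)*t^2 - (4*pi^3-128)*t^4)"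
proof -
  have c: "1 - t^2/2 + t^4/24 - t^6/720 - t^8/40320 \<le> cos t" using cos_bnd[OF assms(1)] by linarith
  have N: "0 < 2*pi^5 - (8*pi^3 - pi^5)*t^2 - (4*pi^3-128)*t^4" by (rule N2pos)
  have Q: "0 < t^4 * QA2 pi t"
    using QA2pos[OF pi_bnds, of t] assms by simp
  have "(1 - t^2/2 + t^4/24 - t^6/720 - t^8/40320) * (2*pi^5 - (8*pi^3 - pi^5)*t^2 - (4*pi^3-128)*t^4) - 2*pi^3*(pi^2-4*t^2) > 0"
    using IA2[of t pi] Q by linarith
  moreover have "(1 - t^2/2 + t^4/24 - t^6/720 - t^8/40320) * (2*pi^5 - (8*pi^3 - pi^5)*t^2 - (4*pi^3-128)*t^4) \<le> cos t * (2*pi^5 - (8*pi^3 - pi^5)*t^2 - (4*pi^3-128)*t^4)"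
    using c N by (intro mult_right_mono) auto
  ultimately show ?thesis by linarith
qed

lemma lowB:
  fixes u :: real assumes "0 < u" "u \<le> 0.5708"
  shows "sin u * (pi^5 + (28*pi^2-8*pi^3)*(pi/2-u)^2 + (16*pi-48)*(pi/2-u)^4) < pi^3*(4*u*(pi-u))"
proof -
  have c: "sin u \<le> u - u^3/6 + u^5/120 + u^7/5040" using sin_bnd[OF assms(1)] by linarith
  have N: "0 < pi^5 + (28*pi^2-8*pi^3)*(pi/2-u)^2 + (16*pi-48)*(pi/2-u)^4" by (rule N1pos)
  have Q: "0 < u^3 * QB1 pi u"
    using QB1pos[OF pi_bnds, of u] assms by simp
  have "pi^3*(4*u*(pi-u)) - (u - u^3/6 + u^5/120 + u^7/5040) * (pi^5 + (28*pi^2-8*pi^3)*(pi/2-u)^2 + (16*pi-48)*(pi/2-u)^4) > 0"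
    using IB1[of "pi/2-u" pi u, OF refl_two] Q by linarith
  moreover have "sin u * (pi^5 + (28*pi^2-8*pi^3)*(pi/2-u)^2 + (16*pi-48)*(pi/2-u)^4) \<le> (u - u^3/6 + u^5/120 + u^7/5040) * (pi^5 + (28*pi^2-8*pi^3)*(pi/2-u)^2 + (16*pi-48)*(pi/2-u)^4)"
    using c N by (intro mult_right_mono) auto
  ultimately show ?thesis by linarith
qed

lemma upB:
  fixes u :: real assumes "0 < u" "u \<le> 0.5708"
  shows "2*pi^3*(4*u*(pi-u)) < sin u * (2*pi^5 - (8*pi^3 - pi^5)*(pi/2-u)^2 - (4*pi^3-128)*(pi/2-u)^4)"
proof -
  have c: "u - u^3/6 + u^5/120 - u^7/5040 \<le> sin u" using sin_bnd[OF assms(1)] by linarith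
  have N: "0 < 2*pi^5 - (8*pi^3 - pi^5)*(pi/2-u)^2 - (4*pi^3-128)*(pi/2-u)^4" by (rule N2pos)
  have Q: "0 < u^2 * QB2 pi u"
    using QB2pos[OF pi_bnds, of u] assms by simp
  have "(u - u^3/6 + u^5/120 - u^7/5040) * (2*pi^5 - (8*pi^3 - pi^5)*(pi/2-u)^2 - (4*pi^3-128)*(pi/2-u)^4) - 2*pi^3*(4*u*(pi-u)) > 0"
    using IB2[of "pi/2-u" pi u, OF refl_two] Q by linarith
  moreover have "(u - u^3/6 + u^5/120 - u^7/5040) * (2*pi^5 - (8*pi^3 - pi^5)*(pi/2-u)^2 - (4*pi^3-128)*(pi/2-u)^4) \<le> sin u * (2*pi^5 - (8*pi^3 - pi^5)*(pi/2-u)^2 - (4*pi^3-128)*(pi/2-u)^4)"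
    using c N by (intro mult_right_mono) auto
  ultimately show ?thesis by linarith
qed

lemma both_pos:
  fixes s :: real assumes "0 < s" "s < pi/2"
  shows "cos s * (pi^5 + (28*pi^2-8*pi^3)* s^2 + (16*pi-48)* s^4) < pi^3*(pi^2-4* s^2)
       \<and> 2*pi^3*(pi^2-4* s^2) < cos s * (2*pi^5 - (8*pi^3 - pi^5)* s^2 - (4*pi^3-128)* s^4)"
proof (cases "s \<le> 1")
  case True
  then show ?thesis using lowA[OF assms(1) True] upA[OF assms(1) True] by simp
next
  case False
  define u where "u = pi/2 - s"
  have s: "s = pi/2 - u" unfolding u_def by simp
  have u0: "0 < u" using assms unfolding u_def by simp
  have u1: "u \<le> 0.5708" using False pi_bnds unfolding u_def by simp
  have cs: "cos s = sin u" unfolding u_def by (simp add: sin_cos_eq)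
  have D: "pi^2 - 4* s^2 = 4*u*(pi-u)" unfolding s by (simp add: algebra_simps power2_eq_square)
  show ?thesis unfolding cs D using lowB[OF u0 u1] upB[OF u0 u1] unfolding s by simp
qed

lemma aux1: "0<c \<Longrightarrow> 0<D \<Longrightarrow> 0<k \<Longrightarrow> c*A < k*D \<Longrightarrow> A/k/D < 1/c" for A c D k :: real
  by (simp add: field_simps)
lemma aux2: "0<c \<Longrightarrow> 0<D \<Longrightarrow> 0<k \<Longrightarrow> k*D < c*B \<Longrightarrow> 1/c < B/k/D" for B c D k :: real
  by (simp add: field_simps)

theorem mainTheorem17:
  fixes t :: real
  assumes "0 < \<bar>t\<bar>" and "\<bar>t\<bar> < pi / 2"
  shows "(pi^2 + (28 - 8*pi)/pi * t^2 + (16*pi - 48)/pi^3 * t^4) / (pi^2 - 4*t^2) < sec t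
       \<and> sec t < (pi^2 - (8 - pi^2)/2 * t^2 - (4*pi^3 - 128)/(2*pi^3) * t^4) / (pi^2 - 4*t^2)"
proof -
  define s where "s = \<bar>t\<bar>"
  have s0: "0 < s" "s < pi/2" using assms s_def by auto
  have t2: "t^2 = s^2" "t^4 = s^4" unfolding s_def by (simp_all add: power_even_abs)
  have cs: "cos t = cos s" unfolding s_def by (cases "t \<ge> 0") auto
  have cpos: "0 < cos s" using s0 by (intro cos_gt_zero_pi) auto
  have Dpos: "0 < pi^2 - 4* s^2"
  proof -
    have "(2* s)^2 < pi^2" using s0 by (intro power_strict_mono) auto
    then show ?thesis by (simp add: power_mult_distrib)
  qed
  have e1: "pi^2 + (28 - 8*pi)/pi * s^2 + (16*pi - 48)/pi^3 * s^4 = (pi^5 + (28*pi^2-8*pi^3)* s^2 + (16*pi-48)* s^4)/pi^3"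
    by (simp add: field_simps power_def)
  have e2: "pi^2 - (8 - pi^2)/2 * s^2 - (4*pi^3 - 128)/(2*pi^3) * s^4 = (2*pi^5 - (8*pi^3 - pi^5)* s^2 - (4*pi^3-128)* s^4)/(2*pi^3)"
    by (simp add: field_simps power_def)
  from both_pos[OF s0] have L: "cos s * (pi^5 + (28*pi^2-8*pi^3)* s^2 + (16*pi-48)* s^4) < pi^3*(pi^2-4* s^2)"
    and U: "2*pi^3*(pi^2-4* s^2) < cos s * (2*pi^5 - (8*pi^3 - pi^5)* s^2 - (4*pi^3-128)* s^4)" by auto
  show ?thesis
    unfolding sec_def cs t2 e1 e2
    using aux1[OF cpos Dpos _ L] aux2[OF cpos Dpos _ U] by simp
qed

end
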